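(* Fix a cell with no source term ($S=0$) and total energy $E=1$, a positive integer $N_{obj}$, $w_{obj}=1/N_{obj}$, and a finite initial population $X_0$ of particles with positive weights summing to $1$. Apply repeatedly the cell-based population control step with conservative splitting described in the context, and let $X_l$ be the population after $l$ iterations and $X_\mathbb{T}$ the population of exactly $N_{obj}$ particles of weight $w_{obj}$. For $\epsilon>0$ let $$\mathcal T_\epsilon=\Big\{(w_1,\dots,w_{N_{obj}})\in\mathbb{R}^{N_{obj}}:\ \sum_{k=1}^{N_{obj}}w_k=N_{obj}w_{obj},\ \sum_{k=1}^{N_{obj}}|w_k-w_{obj}|\le\epsilon w_{obj}\Big\},$$ say $X_l\in\mathcal T_\epsilon$ if $X_l$ consists of exactly $N_{obj}$ particles whose weights form a tuple in $\mathcal T_\epsilon$, and let $\tau_\epsilon$ be the first $l$ with $X_l\in\mathcal T_\epsilon$. Then there exists a constant $c_3>0$ depending only on $N_{obj}$ such that, for every $\epsilon>0$, $$\mathbb{P}\big[\lim_{l\to\infty}X_l=X_\mathbb{T}\ \big|\ \tau_\epsilon<\infty\big]\ge 1-c_3\epsilon .$$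
   Context: Cell-based population control step for a single cell with existing particle weights $w_1,\dots,w_N$, $E=\sum_pw_p$, source $S\ge0$, target number $N_{obj}\ge1$ and $E+S>0$: set $w_{obj}=(E+S)/N_{obj}$; if $S>0$ emit $N^{vol}=\max(1,\lfloor S/w_{obj}\rfloor)$ particles of weight $S/N^{vol}$. If $E>0$, for each existing particle draw independently $u_p\sim\mathcal U(0,1)$, $I_p=\lfloor w_p/w_{obj}\rfloor$, $R_p=w_p/w_{obj}-I_p$; if $I_p=0$ (Russian Roulette) the particle is killed if $R_p<u_p$, otherwise its weight becomes $w_{obj}$; if $I_p\ge1$ (conservative Splitting) it is replaced by $N^{split}_p=I_p+\mathbf 1_{\{u_p<R_p\}}$ copies each of weight $w_p/N^{split}_p$. Then all weights are multiplied by a common factor so that the total is $E+S$. Non-void correction: if $S=0$ and no particle remains, the population becomes one particle of weight $E$. Populations are compared as elements of $\ell^1$ (weights in nonincreasing order padded with zeros); successive iterations use fresh independent uniform variables. *)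

theory Defs
  imports "HOL-Probability.Probability"
begin

definition pc_particle :: "real \<Rightarrow> real \<Rightarrow> real \<Rightarrow> real list" where
  "pc_particle wobj w u =
     (let x = w / wobj; I = nat \<lfloor>x\<rfloor>; R = x - real I in
      if I = 0 then (if R < u then [] else [wobj])
      else (let Ns = I + (if u < R then 1 else 0) in replicate Ns (w / real Ns)))"

definition pc_step :: "nat \<Rightarrow> real \<Rightarrow> real list \<Rightarrow> (nat \<Rightarrow> real) \<Rightarrow> real list" where
  "pc_step Nobj S ws u =
     (let E = sum_list ws;
          wobj = (E + S) / real Nobj;
          emitted = (if S > 0 then
                       (let Nv = max 1 (nat \<lfloor>S / wobj\<rfloor>) in replicate Nv (S / real Nv))
                     else []);
          survivors = (if E > 0 then concat (map (\<lambda>p. pc_particle wobj (ws ! p) (u p)) [0..<length ws])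
                       else []);
          pre = emitted @ survivors;
          normed = map (\<lambda>w. w * ((E + S) / sum_list pre)) pre
      in if S = 0 \<and> survivors = [] then [E] else normed)"

fun pc_iter :: "nat \<Rightarrow> real list \<Rightarrow> (nat \<times> nat \<Rightarrow> real) \<Rightarrow> nat \<Rightarrow> real list" where
  "pc_iter Nobj X0 u 0 = X0"
| "pc_iter Nobj X0 u (Suc l) = pc_step Nobj 0 (pc_iter Nobj X0 u l) (\<lambda>p. u (l, p))"

text \<open>Probability space: i.i.d. uniform(0,1) variables indexed by (iteration, particle).\<close>
definition pc_space :: "(nat \<times> nat \<Rightarrow> real) measure" where
  "pc_space = PiM UNIV (\<lambda>_. uniform_measure lborel {0<..<1})"

text \<open>Population as an element of l1: weights in nonincreasing order padded with zeros.\<close>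
definition pop_seq :: "real list \<Rightarrow> nat \<Rightarrow> real" where
  "pop_seq xs i = (if i < length xs then rev (sort xs) ! i else 0)"

definition l1_dist :: "real list \<Rightarrow> real list \<Rightarrow> real" where
  "l1_dist xs ys = (\<Sum>i < max (length xs) (length ys). \<bar>pop_seq xs i - pop_seq ys i\<bar>)"

definition in_T :: "nat \<Rightarrow> real \<Rightarrow> real list \<Rightarrow> bool" where
  "in_T Nobj eps ws =
     (let wobj = 1 / real Nobj in
      length ws = Nobj \<and> sum_list ws = real Nobj * wobj \<and>
      (\<Sum>w\<leftarrow>ws. \<bar>w - wobj\<bar>) \<le> eps * wobj)"

end

theory Submission
  imports Defs
begin


abbreviation "U \<equiv> uniform_measure lborel {0<..<(1::real)}"

lemma prob_U: "prob_space U"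
  by (rule prob_space_uniform_measure) auto

lemma pps: "product_prob_space (\<lambda>_::nat\<times>nat. U)"
  unfolding product_prob_space_def product_prob_space_axioms_def product_sigma_finite_def
  using prob_U prob_space_imp_sigma_finite by blast

lemma prob_pc: "prob_space pc_space"
  unfolding pc_space_def by (rule prob_space_PiM) (rule prob_U)

lemma space_pc: "space pc_space = UNIV"
  unfolding pc_space_def by (simp add: space_PiM)

lemma indep_coords: "prob_space.indep_vars pc_space (\<lambda>_. U) (\<lambda>i x. x i) UNIV"
proof -
  interpret P: product_prob_space "\<lambda>_::nat\<times>nat. U" UNIV by (rule pps)
  interpret Q: prob_space pc_space by (rule prob_pc)
  have rv: "\<And>i. Q.random_variable U (\<lambda>x. x i)"
    unfolding pc_space_def by (rule measurable_component_singleton) simp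
  have e: "(\<lambda>x. \<lambda>i\<in>UNIV. x i) = (\<lambda>x::nat\<times>nat\<Rightarrow>real. x)" by (auto simp: restrict_def)
  have "distr pc_space (\<Pi>\<^sub>M i\<in>UNIV. U) (\<lambda>x. \<lambda>i\<in>UNIV. x i) = (\<Pi>\<^sub>M i\<in>UNIV. distr pc_space U (\<lambda>x. x i))"
    unfolding e pc_space_def
    using P.PiM_component[of i for i] by (simp add: distr_id2)
  then show ?thesis
    by (subst Q.indep_vars_iff_distr_eq_PiM) (auto simp: rv)
qed


lemma indep_restrict:
  assumes "K \<inter> L = {}" "A' \<in> sets (PiM K (\<lambda>_. U))" "B' \<in> sets (PiM L (\<lambda>_. U))"
  shows "measure pc_space {u. restrict u K \<in> A' \<and> restrict u L \<in> B'} =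
         measure pc_space {u. restrict u K \<in> A'} * measure pc_space {u. restrict u L \<in> B'}"
proof -
  interpret Q: prob_space pc_space by (rule prob_pc)
  have iv: "Q.indep_var (PiM K (\<lambda>_. U)) (\<lambda>\<omega>. restrict (\<lambda>i. \<omega> i) K) (PiM L (\<lambda>_. U)) (\<lambda>\<omega>. restrict (\<lambda>i. \<omega> i) L)"
    by (rule Q.indep_var_restrict[OF indep_coords]) (use assms in auto)
  from Q.indep_varD[OF iv assms(2,3)] show ?thesis
    by (simp add: space_pc vimage_def)
qed

definition FR :: "'a measure \<Rightarrow> ('a \<Rightarrow> 'b) \<Rightarrow> bool" where
  "FR M f \<longleftrightarrow> (\<exists>F. finite F \<and> (\<forall>u\<in>space M. f u \<in> F)) \<and> (\<forall>v. {u\<in>space M. f u = v} \<in> sets M)"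

lemma FR_const: "FR M (\<lambda>u. c)"
  unfolding FR_def by (auto intro!: exI[of _ "{c}"])

lemma FR_bind:
  assumes f: "FR M f" and H: "\<And>a. FR M (H a)"
  shows "FR M (\<lambda>u. H (f u) u)"
proof -
  obtain F where F: "finite F" "\<forall>u\<in>space M. f u \<in> F" using f unfolding FR_def by blast
  have "\<forall>a. \<exists>G. finite G \<and> (\<forall>u\<in>space M. H a u \<in> G)" using H unfolding FR_def by blast
  then obtain G where G: "\<And>a. finite (G a)" "\<And>a u. u \<in> space M \<Longrightarrow> H a u \<in> G a" by metis
  have r: "\<forall>u\<in>space M. H (f u) u \<in> (\<Union>a\<in>F. G a)" using F G by blast
  have "{u\<in>space M. H (f u) u = v} = (\<Union>a\<in>F. {u\<in>space M. f u = a} \<inter> {u\<in>space M. H a u = v})" for v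
    using F by auto
  moreover have "(\<Union>a\<in>F. {u\<in>space M. f u = a} \<inter> {u\<in>space M. H a u = v}) \<in> sets M" for v
    using F f H unfolding FR_def by (intro sets.finite_UN) auto
  ultimately show ?thesis unfolding FR_def using r F G by (metis finite_UN_I)
qed

lemma FR_map: "FR M f \<Longrightarrow> FR M (\<lambda>u. g (f u))"
  by (erule FR_bind[of M f "\<lambda>a u. g a"]) (rule FR_const)

lemma FR_pair: "FR M f \<Longrightarrow> FR M g \<Longrightarrow> FR M (\<lambda>u. h (f u) (g u))"
  by (rule FR_bind[of M f "\<lambda>a u. h a (g u)"]) (auto intro: FR_map)

lemma FR_if:
  assumes P: "{u\<in>space M. P u} \<in> sets M" and f: "FR M f" and g: "FR M g"
  shows "FR M (\<lambda>u. if P u then f u else g u)"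
proof -
  obtain F where F: "finite F" "\<forall>u\<in>space M. f u \<in> F" using f unfolding FR_def by blast
  obtain G where G: "finite G" "\<forall>u\<in>space M. g u \<in> G" using g unfolding FR_def by blast
  have e: "{u\<in>space M. (if P u then f u else g u) = v} =
      ({u\<in>space M. P u} \<inter> {u\<in>space M. f u = v}) \<union> ((space M - {u\<in>space M. P u}) \<inter> {u\<in>space M. g u = v})" for v
    by auto
  show ?thesis unfolding FR_def e
    using F G f g P unfolding FR_def
    by (intro conjI exI[of _ "F \<union> G"] allI sets.Un sets.Int sets.Diff) auto
qed

lemma FR_pred: assumes "FR M f" shows "{u\<in>space M. Q (f u)} \<in> sets M"
proof -
  obtain F where F: "finite F" "\<forall>u\<in>space M. f u \<in> F" using assms unfolding FR_def by blast
  have "{u\<in>space M. Q (f u)} = (\<Union>a\<in>{a\<in>F. Q a}. {u\<in>space M. f u = a})" using F by auto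
  also have "\<dots> \<in> sets M" using F assms unfolding FR_def by (intro sets.finite_UN) auto
  finally show ?thesis .
qed

lemma FR_concat: "(\<And>p. FR M (f p)) \<Longrightarrow> FR M (\<lambda>u. concat (map (\<lambda>p. f p u) xs))"
  by (induction xs) (auto intro: FR_const FR_pair)

lemma pc_particle_alt:
  "pc_particle c w x = (if nat\<lfloor>w/c\<rfloor> = 0 then (if w/c - real(nat \<lfloor>w/c\<rfloor>) < x then [] else [c])
     else if x < w/c - real(nat\<lfloor>w/c\<rfloor>) then replicate (nat\<lfloor>w/c\<rfloor>+1) (w/real(nat\<lfloor>w/c\<rfloor>+1))
     else replicate (nat\<lfloor>w/c\<rfloor>) (w/real(nat\<lfloor>w/c\<rfloor>)))"
  by (simp add: pc_particle_def Let_def)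

lemma FR_particle:
  assumes "g \<in> borel_measurable M"
  shows "FR M (\<lambda>u. pc_particle c w (g u))"
proof -
  have s1: "{u\<in>space M. a < g u} \<in> sets M" for a using assms borel_measurable_iff_greater by blast
  have s2: "{u\<in>space M. g u < a} \<in> sets M" for a using assms borel_measurable_iff_less by blast
  show ?thesis unfolding pc_particle_alt
    by (intro FR_if FR_const s1 s2 sets.sets_Collect_const)
qed

lemma pc_step0:
  "pc_step N 0 v r = (let E = sum_list v; surv = (if E > 0 then concat (map (\<lambda>p. pc_particle (E / real N) (v ! p) (r p)) [0..<length v]) else [])
     in if surv = [] then [E] else map (\<lambda>w. w * (E / sum_list surv)) surv)"
  by (simp add: pc_step_def Let_def)

lemma FR_step:
  assumes "\<And>p. (\<lambda>u. u (l, p)) \<in> borel_measurable M"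
  shows "FR M (\<lambda>u. pc_step N 0 v (\<lambda>p. u (l, p)))"
proof -
  have "FR M (\<lambda>u. (if sum_list v > 0 then concat (map (\<lambda>p. pc_particle (sum_list v / real N) (v ! p) (u (l, p))) [0..<length v]) else []))"
    by (cases "sum_list v > 0") (auto intro!: FR_concat FR_particle assms FR_const)
  then show ?thesis unfolding pc_step0 Let_def by (rule FR_map)
qed

lemma FR_iter:
  assumes "\<And>k p. k < l \<Longrightarrow> (\<lambda>u. u (k, p)) \<in> borel_measurable M"
  shows "FR M (\<lambda>u. pc_iter N X0 u l)"
  using assms
proof (induction l)
  case 0 then show ?case by (simp add: FR_const)
next
  case (Suc l)
  show ?case
    unfolding pc_iter.simps
    by (rule FR_bind[where H="\<lambda>a u. pc_step N 0 a (\<lambda>p. u (l, p))"]) (use Suc in \<open>auto intro!: FR_step\<close>)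
qed



definition Dv :: "nat \<Rightarrow> real list \<Rightarrow> real" where
  "Dv N v = (\<Sum>w\<leftarrow>v. \<bar>w - 1 / real N\<bar>)"

definition Gs :: "nat \<Rightarrow> real list \<Rightarrow> real list" where
  "Gs N v = map (\<lambda>w. w * (1 / sum_list (map (\<lambda>w. max w (1 / real N)) v))) (map (\<lambda>w. max w (1 / real N)) v)"

definition bad :: "real \<Rightarrow> real \<Rightarrow> real \<Rightarrow> bool" where
  "bad c w r = (if w < c then w / c < r else r < w / c - 1)"

lemma sl_div: "(\<Sum>w\<leftarrow>xs. f w / (r::real)) = (\<Sum>w\<leftarrow>xs. f w) / r"
  by (induction xs) (auto simp: add_divide_distrib)

lemma particle_good:
  assumes "c > 0" "0 < w" "w < 2 * c" "\<not> bad c w r"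
  shows "pc_particle c w r = [max w c]"
proof (cases "w < c")
  case True
  then have "w / c < 1" "0 < w / c" using assms by (auto simp: divide_less_eq)
  then have "nat \<lfloor>w / c\<rfloor> = 0" by linarith
  then show ?thesis using assms True by (simp add: pc_particle_def Let_def bad_def)
next
  case False
  then have "1 \<le> w / c" "w / c < 2" using assms by (auto simp: le_divide_eq divide_less_eq)
  then have "nat \<lfloor>w / c\<rfloor> = 1" by linarith
  then show ?thesis using assms False by (simp add: pc_particle_def Let_def bad_def)
qed

lemma concat_single: "concat (map (\<lambda>p. [g p]) xs) = map g xs"
  by (induction xs) auto

lemma step_good:
  assumes N: "N \<ge> 1" and len: "length v = N" and s: "sum_list v = 1"
    and pos: "\<forall>w\<in>set v. 0 < w \<and> w < 2 / real N"
    and nb: "\<forall>p<length v. \<not> bad (1 / real N) (v ! p) (r p)"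
  shows "pc_step N 0 v r = Gs N v"
proof -
  have c: "1 / real N > 0" using N by simp
  have "concat (map (\<lambda>p. pc_particle (1 / real N) (v ! p) (r p)) [0..<length v])
      = concat (map (\<lambda>p. [max (v ! p) (1 / real N)]) [0..<length v])"
    using pos nb c by (intro arg_cong[where f=concat] map_cong refl particle_good) auto
  also have "\<dots> = map (\<lambda>w. max w (1 / real N)) v"
    unfolding concat_single by (metis (no_types, lifting) map_eq_conv map_map map_nth o_apply)
  finally have surv: "concat (map (\<lambda>p. pc_particle (1 / real N) (v ! p) (r p)) [0..<length v]) = map (\<lambda>w. max w (1 / real N)) v" .
  have ne: "map (\<lambda>w. max w (1 / real N)) v \<noteq> []" using len N by auto
  show ?thesis unfolding pc_step0 Let_def s using surv ne by (simp add: Gs_def)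
qed

lemma minsum: "\<forall>x\<in>set xs. x \<ge> 0 \<Longrightarrow> (m::real) \<ge> 0 \<Longrightarrow> (\<Sum>x\<leftarrow>xs. min x m) \<ge> min (sum_list xs) m"
proof (induction xs)
  case Nil then show ?case by simp
next
  case (Cons a xs)
  then have "(\<Sum>x\<leftarrow>xs. min x m) \<ge> min (sum_list xs) m" by simp
  moreover have "(\<Sum>x\<leftarrow>xs. min x m) \<ge> 0" using Cons.prems by (intro sum_list_nonneg) auto
  moreover have "sum_list xs \<ge> 0" using Cons.prems by (simp add: sum_list_nonneg)
  ultimately show ?case using Cons.prems by (auto simp: min_def split: if_splits)
qed

lemma absdev:
  fixes xs :: "real list"
  assumes "\<forall>x\<in>set xs. x \<ge> 0" "m \<ge> 0" "real (length xs) * m = sum_list xs" "length xs \<ge> 1"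
  shows "(\<Sum>x\<leftarrow>xs. \<bar>x - m\<bar>) \<le> 2 * (sum_list xs - m)"
proof -
  have pt: "\<bar>x - m\<bar> = (x - m) + 2 * (m - min x m)" for x by (auto simp: min_def)
  have "(\<Sum>x\<leftarrow>xs. \<bar>x - m\<bar>) = (\<Sum>x\<leftarrow>xs. (x - m) + 2 * (m - min x m))" by (simp add: pt)
  also have "\<dots> = (sum_list xs - real (length xs) * m) + 2 * (real (length xs) * m - (\<Sum>x\<leftarrow>xs. min x m))"
    by (simp add: sum_list_addf sum_list_subtractf sum_list_const_mult sum_list_triv)
  also have "\<dots> \<le> 2 * (sum_list xs - m)"
  proof -
    have L: "real (length xs) \<ge> 1" using assms(4) by simp
    have "1 * m \<le> real (length xs) * m" by (rule mult_right_mono[OF L assms(2)])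
    then have "min (sum_list xs) m = m" using assms(3) by simp
    then have h1: "m \<le> (\<Sum>x\<leftarrow>xs. min x m)" using minsum[OF assms(1,2)] by simp
    show ?thesis unfolding assms(3) using h1 by (simp add: algebra_simps)
  qed
  finally show ?thesis .
qed

lemma G_props:
  assumes N: "N \<ge> 1" and len: "length v = N" and s: "sum_list v = 1"
  shows "length (Gs N v) = N" "sum_list (Gs N v) = 1" "Dv N (Gs N v) \<le> (1 - 1 / real N) * Dv N v"
proof -
  define c where "c = 1 / real N"
  have c0: "c > 0" "c \<le> 1" "real N * c = 1" using N by (auto simp: c_def)
  define e where "e = (\<lambda>w. max (w - c) 0)"
  define P where "P = (\<Sum>w\<leftarrow>v. e w)"
  have P0: "P \<ge> 0" unfolding P_def e_def by (intro sum_list_nonneg) auto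
  have pre: "map (\<lambda>w. max w c) v = map (\<lambda>w. c + e w) v" by (auto simp: e_def max_def)
  have sp: "sum_list (map (\<lambda>w. max w c) v) = 1 + P"
  proof -
    have "sum_list (map (\<lambda>w. max w c) v) = (\<Sum>w\<leftarrow>v. c) + P" unfolding pre by (simp add: sum_list_addf P_def)
    also have "(\<Sum>w\<leftarrow>v. c) = real (length v) * c" by (simp add: sum_list_triv)
    also have "real (length v) * c = 1" using len c0 by simp
    finally show ?thesis .
  qed
  show "length (Gs N v) = N" by (simp add: Gs_def len)
  show "sum_list (Gs N v) = 1"
    using sp P0 unfolding Gs_def c_def[symmetric]
    by (simp add: o_def sl_div)
  have G: "Gs N v = map (\<lambda>w. (c + e w) / (1 + P)) v"
    unfolding Gs_def c_def[symmetric] sp by (auto simp: e_def max_def intro!: map_cong)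
  have D1: "Dv N (Gs N v) = (\<Sum>w\<leftarrow>v. \<bar>e w - c * P\<bar>) / (1 + P)"
  proof -
    have "\<bar>(c + e w) / (1 + P) - c\<bar> = \<bar>e w - c * P\<bar> / (1 + P)" for w
    proof -
      have "(c + e w) / (1 + P) - c = (e w - c * P) / (1 + P)" using P0 by (simp add: field_simps)
      then show ?thesis using P0 by simp
    qed
    then have "Dv N (Gs N v) = (\<Sum>w\<leftarrow>v. \<bar>e w - c * P\<bar> / (1 + P))"
      unfolding Dv_def G c_def[symmetric] by (simp add: o_def)
    then show ?thesis by (simp only: sl_div)
  qed
  have D2: "(\<Sum>w\<leftarrow>v. \<bar>e w - c * P\<bar>) \<le> 2 * (P - c * P)"
  proof -
    have "(\<Sum>x\<leftarrow>map e v. \<bar>x - c * P\<bar>) \<le> 2 * (sum_list (map e v) - c * P)"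
    proof (rule absdev)
      show "\<forall>x\<in>set (map e v). 0 \<le> x" by (auto simp: e_def)
      show "0 \<le> c * P" using c0 P0 by simp
      show "real (length (map e v)) * (c * P) = sum_list (map e v)"
        using c0 len by (simp add: P_def)
      show "1 \<le> length (map e v)" using len N by simp
    qed
    then show ?thesis by (simp add: P_def o_def)
  qed
  have X0: "(\<Sum>w\<leftarrow>v. \<bar>e w - c * P\<bar>) \<ge> 0" by (intro sum_list_nonneg) auto
  have "(\<Sum>w\<leftarrow>v. \<bar>e w - c * P\<bar>) / (1 + P) \<le> (\<Sum>w\<leftarrow>v. \<bar>e w - c * P\<bar>) / 1"
    by (rule divide_left_mono) (use P0 X0 in auto)
  then have D3: "Dv N (Gs N v) \<le> 2 * (P - c * P)" using D1 D2 by simp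
  have D4: "2 * (P - c * P) = (1 - 1 / real N) * (2 * P)" unfolding c_def by (simp add: algebra_simps)
  have Dv2: "Dv N v = 2 * P"
  proof -
    have pt: "\<bar>w - c\<bar> = 2 * e w - (w - c)" for w by (cases "w \<ge> c") (auto simp: e_def max_def abs_if)
    have "Dv N v = (\<Sum>w\<leftarrow>v. 2 * e w - (w - c))" unfolding Dv_def c_def[symmetric] by (simp only: pt)
    also have "\<dots> = 2 * P - (sum_list v - real N * c)"
      by (simp add: sum_list_subtractf sum_list_const_mult sum_list_triv len P_def)
    finally show ?thesis using s c0 by simp
  qed
  show "Dv N (Gs N v) \<le> (1 - 1 / real N) * Dv N v" using D3 D4 Dv2 by simp
qed

lemma Dv_pos:
  assumes "Dv N v < 1 / real N" "w \<in> set v"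
  shows "0 < w \<and> w < 2 / real N"
proof -
  have "\<bar>w - 1 / real N\<bar> \<le> Dv N v" unfolding Dv_def
    using assms(2) by (intro member_le_sum_list) auto
  then show ?thesis using assms(1) by auto
qed

lemma sum_nth_map: "(\<Sum>i<length xs. f (xs ! i)) = sum_list (map f xs)"
  by (simp add: sum_list_sum_nth atLeast0LessThan)

lemma l1_eq:
  assumes "length v = N"
  shows "l1_dist v (replicate N (1 / real N)) = Dv N v"
proof -
  have r: "pop_seq (replicate N (1 / real N)) i = 1 / real N" if "i < N" for i
  proof -
    have "rev (sort (replicate N (1 / real N))) ! i \<in> set (rev (sort (replicate N (1 / real N))))"
      using that by (intro nth_mem) simp
    then show ?thesis using that by (auto simp: pop_seq_def)
  qed
  have "l1_dist v (replicate N (1 / real N)) = (\<Sum>i<N. \<bar>rev (sort v) ! i - 1 / real N\<bar>)"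
    unfolding l1_dist_def using assms r by (intro sum.cong) (auto simp: pop_seq_def)
  also have "\<dots> = (\<Sum>w\<leftarrow>rev (sort v). \<bar>w - 1 / real N\<bar>)"
    using sum_nth_map[of "\<lambda>w. \<bar>w - 1 / real N\<bar>" "rev (sort v)"] assms by simp
  also have "\<dots> = Dv N v"
  proof -
    have "mset (map (\<lambda>w. \<bar>w - 1 / real N\<bar>) (rev (sort v))) = mset (map (\<lambda>w. \<bar>w - 1 / real N\<bar>) v)"
      by simp
    then have "sum_mset (mset (map (\<lambda>w. \<bar>w - 1 / real N\<bar>) (rev (sort v)))) = sum_mset (mset (map (\<lambda>w. \<bar>w - 1 / real N\<bar>) v))"
      by (rule arg_cong)
    then show ?thesis by (simp only: sum_mset_sum_list Dv_def)
  qed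
  finally show ?thesis .
qed



interpretation Q: prob_space pc_space by (rule prob_pc)

lemma coordK: "i \<in> K \<Longrightarrow> (\<lambda>x. x i) \<in> borel_measurable (PiM K (\<lambda>_. U))"
  using measurable_component_singleton[of i K "\<lambda>_. U"]
    measurable_cong_sets[of "PiM K (\<lambda>_. U)" "PiM K (\<lambda>_. U)" U borel] by simp

lemma coord_pc: "(\<lambda>x. x i) \<in> borel_measurable pc_space"
  unfolding pc_space_def by (rule coordK) simp

definition hist :: "nat \<Rightarrow> real list \<Rightarrow> (nat \<times> nat \<Rightarrow> real) \<Rightarrow> nat \<Rightarrow> real list list" where
  "hist N X0 u l = map (\<lambda>k. pc_iter N X0 u k) [0..<Suc l]"

lemma FR_maplist: "(\<And>k. k \<in> set ks \<Longrightarrow> FR M (f k)) \<Longrightarrow> FR M (\<lambda>u. map (\<lambda>k. f k u) ks)"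
proof (induction ks)
  case Nil then show ?case by (simp add: FR_const)
next
  case (Cons a ks)
  then have "FR M (f a)" "FR M (\<lambda>u. map (\<lambda>k. f k u) ks)" by auto
  then show ?case using FR_pair[of M "f a" "\<lambda>u. map (\<lambda>k. f k u) ks" "(#)"] by simp
qed

lemma FR_hist:
  assumes "\<And>k p. k < l \<Longrightarrow> (\<lambda>u. u (k, p)) \<in> borel_measurable M"
  shows "FR M (\<lambda>u. hist N X0 u l)"
  unfolding hist_def
  by (rule FR_maplist, rule FR_iter) (use assms in auto)

lemma iter_local: "(\<And>k p. k < l \<Longrightarrow> u (k, p) = u' (k, p)) \<Longrightarrow> pc_iter N X0 u l = pc_iter N X0 u' l"
proof (induction l)
  case 0 then show ?case by simp
next
  case (Suc l)
  then have "pc_iter N X0 u l = pc_iter N X0 u' l" by auto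
  moreover have "(\<lambda>p. u (l, p)) = (\<lambda>p. u' (l, p))" using Suc.prems by auto
  ultimately show ?case by simp
qed

lemma hist_local: "(\<And>k p. k < l \<Longrightarrow> u (k, p) = u' (k, p)) \<Longrightarrow> hist N X0 u l = hist N X0 u' l"
  unfolding hist_def by (intro map_cong refl iter_local) auto

lemma hist_nth: "k \<le> l \<Longrightarrow> hist N X0 u l ! k = pc_iter N X0 u k"
  by (simp add: hist_def del: upt_Suc)

lemma hist_last: "last (hist N X0 u l) = pc_iter N X0 u l"
  by (simp add: hist_def)

lemma sets_bad:
  assumes g: "g \<in> borel_measurable M" shows "{u\<in>space M. bad c w (g u)} \<in> sets M"
proof (cases "w < c")
  case True
  then have "{u\<in>space M. bad c w (g u)} = {u\<in>space M. w / c < g u}" by (simp add: bad_def)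
  then show ?thesis using g unfolding borel_measurable_iff_greater by simp
next
  case False
  then have "{u\<in>space M. bad c w (g u)} = {u\<in>space M. g u < w / c - 1}" by (simp add: bad_def)
  then show ?thesis using g unfolding borel_measurable_iff_less by simp
qed

definition rowbad :: "nat \<Rightarrow> nat \<Rightarrow> real list \<Rightarrow> (nat \<times> nat \<Rightarrow> real) \<Rightarrow> bool" where
  "rowbad N l v u = (\<exists>p<length v. bad (1 / real N) (v ! p) (u (l, p)))"

lemma sets_rowbad:
  assumes "\<And>p. (\<lambda>u. u (l, p)) \<in> borel_measurable M"
  shows "{u\<in>space M. rowbad N l v u} \<in> sets M"
proof -
  have "{u\<in>space M. rowbad N l v u} = (\<Union>p\<in>{..<length v}. {u\<in>space M. bad (1 / real N) (v ! p) (u (l, p))})"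
    by (auto simp: rowbad_def)
  also have "\<dots> \<in> sets M" by (intro sets.finite_UN sets_bad assms) auto
  finally show ?thesis .
qed

lemma meas_coord: "A \<in> sets borel \<Longrightarrow> measure pc_space {u. u i \<in> A} = measure U A"
  using product_prob_space.emeasure_PiM_Collect_single[OF pps, of i UNIV A] space_pc
  unfolding pc_space_def measure_def by simp

lemma measU: "A \<in> sets borel \<Longrightarrow> measure U A = measure lborel ({0<..<1} \<inter> A)"
  by (subst measure_uniform_measure) auto

lemma fm_Icc: "{a..b::real} \<in> fmeasurable lborel"
  by (simp add: fmeasurable_def emeasure_lborel_Icc_eq)

lemma bad_prob:
  assumes c: "c > 0"
  shows "measure U {r. bad c w r} \<le> \<bar>w - c\<bar> / c"
proof (cases "w < c")
  case True
  then have wc: "w / c < 1" using c by (simp add: divide_less_eq)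
  have e: "{r. bad c w r} = {w/c<..}" using True by (auto simp: bad_def)
  have "measure lborel ({0<..<1} \<inter> {w/c<..}) \<le> measure lborel {max 0 (w/c)..1}"
    by (rule measure_mono_fmeasurable) (auto simp: fm_Icc)
  also have "\<dots> = 1 - max 0 (w/c)" using wc by simp
  also have "\<dots> \<le> 1 - w / c" by simp
  also have "\<dots> = \<bar>w - c\<bar> / c" using True c by (simp add: field_simps)
  finally show ?thesis unfolding e by (subst measU) auto
next
  case False
  then have wc: "0 \<le> w / c - 1" using c by (simp add: le_divide_eq)
  have e: "{r. bad c w r} = {..<w/c - 1}" using False by (auto simp: bad_def)
  have "measure lborel ({0<..<1} \<inter> {..<w/c - 1}) \<le> measure lborel {0..w/c - 1}"
    by (rule measure_mono_fmeasurable) (auto simp: fm_Icc)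
  also have "\<dots> = w / c - 1" using wc by simp
  also have "\<dots> = \<bar>w - c\<bar> / c" using False c by (simp add: field_simps)
  finally show ?thesis unfolding e by (subst measU) auto
qed

lemma prob_rowbad:
  assumes N: "N \<ge> 1"
  shows "measure pc_space {u. rowbad N l v u} \<le> Dv N v * real N"
proof -
  let ?c = "1 / real N"
  have c: "?c > 0" using N by simp
  have sb: "{r. bad ?c w r} \<in> sets borel" for w
    using sets_bad[of "\<lambda>x. x" borel ?c w] by simp
  have "{u. rowbad N l v u} = (\<Union>p\<in>{..<length v}. {u. u (l, p) \<in> {r. bad ?c (v ! p) r}})"
    by (auto simp: rowbad_def)
  then have "measure pc_space {u. rowbad N l v u} \<le> (\<Sum>p<length v. measure pc_space {u. u (l, p) \<in> {r. bad ?c (v ! p) r}})"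
    using measure_UNION_le[of "{..<length v}" "\<lambda>p. {u. u (l, p) \<in> {r. bad ?c (v ! p) r}}" pc_space]
    using sets_bad[OF coord_pc, of ?c] space_pc by auto
  also have "\<dots> = (\<Sum>p<length v. measure U {r. bad ?c (v ! p) r})"
    using meas_coord[OF sb] by simp
  also have "\<dots> \<le> (\<Sum>p<length v. \<bar>v ! p - ?c\<bar> / ?c)"
    by (intro sum_mono bad_prob c)
  also have "\<dots> = (\<Sum>p<length v. \<bar>v ! p - ?c\<bar>) * real N"
    by (simp add: sum_distrib_right)
  also have "(\<Sum>p<length v. \<bar>v ! p - ?c\<bar>) = Dv N v"
    unfolding Dv_def by (rule sum_nth_map)
  finally show ?thesis .
qed

lemma space_PiK: "restrict u K \<in> space (PiM K (\<lambda>_. U))"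
  by (simp add: space_PiM)

lemma indep_hist_row:
  "measure pc_space {u. hist N X0 u l = h \<and> rowbad N l v u} =
   measure pc_space {u. hist N X0 u l = h} * measure pc_space {u. rowbad N l v u}"
proof -
  define K where "K = {kp :: nat \<times> nat. fst kp < l}"
  define L where "L = {kp :: nat \<times> nat. fst kp = l}"
  define A' where "A' = {u'\<in>space (PiM K (\<lambda>_. U)). hist N X0 u' l = h}"
  define B' where "B' = {u'\<in>space (PiM L (\<lambda>_. U)). rowbad N l v u'}"
  have KL: "K \<inter> L = {}" by (auto simp: K_def L_def)
  have A: "A' \<in> sets (PiM K (\<lambda>_. U))"
    unfolding A'_def by (rule FR_pred, rule FR_hist, rule coordK) (auto simp: K_def)
  have B: "B' \<in> sets (PiM L (\<lambda>_. U))"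
    unfolding B'_def by (rule sets_rowbad, rule coordK) (auto simp: L_def)
  have hA: "hist N X0 (restrict u K) l = hist N X0 u l" for u
    by (rule hist_local) (auto simp: K_def)
  have hB: "rowbad N l v (restrict u L) = rowbad N l v u" for u
    by (auto simp: rowbad_def L_def)
  have e1: "{u. restrict u K \<in> A'} = {u. hist N X0 u l = h}"
    unfolding A'_def using hA space_PiK by auto
  have e2: "{u. restrict u L \<in> B'} = {u. rowbad N l v u}"
    unfolding B'_def using hB space_PiK by auto
  have e3: "{u. restrict u K \<in> A' \<and> restrict u L \<in> B'} = {u. hist N X0 u l = h \<and> rowbad N l v u}"
    using e1 e2 by blast
  show ?thesis using indep_restrict[OF KL A B] unfolding e1 e2 e3 .
qed

lemma FR_bool: "{u\<in>space M. P u} \<in> sets M \<Longrightarrow> FR M P"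
proof -
  assume a: "{u\<in>space M. P u} \<in> sets M"
  have "{u\<in>space M. P u = b} \<in> sets M" for b
  proof (cases b)
    case True then show ?thesis using a by simp
  next
    case False
    have "{u\<in>space M. P u = b} = space M - {u\<in>space M. P u}" using False by auto
    then show ?thesis using a by auto
  qed
  then show ?thesis unfolding FR_def by (auto intro!: exI[of _ UNIV])
qed

lemma FR_set: "FR M P \<Longrightarrow> {u\<in>space M. P u} \<in> sets M"
  using FR_pred[of M P "\<lambda>b. b"] by simp

lemma FR_pc_iter: "FR pc_space (\<lambda>u. pc_iter N X0 u l)"
  by (rule FR_iter) (rule coord_pc)

lemma FR_pc_hist: "FR pc_space (\<lambda>u. hist N X0 u l)"
  by (rule FR_hist) (rule coord_pc)

lemma sets_hist: "{u. Psi (hist N X0 u l)} \<in> sets pc_space"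
  using FR_pred[OF FR_pc_hist, of Psi] space_pc by simp

lemma sets_hist_row: "{u. Psi (hist N X0 u l) \<and> rowbad N l (pc_iter N X0 u l) u} \<in> sets pc_space"
proof -
  have "FR pc_space (\<lambda>u. rowbad N l (pc_iter N X0 u l) u)"
    by (rule FR_bind[OF FR_pc_iter, where H="\<lambda>a u. rowbad N l a u"], rule FR_bool, rule sets_rowbad, rule coord_pc)
  then have "FR pc_space (\<lambda>u. Psi (hist N X0 u l) \<and> rowbad N l (pc_iter N X0 u l) u)"
    using FR_pair[OF FR_pc_hist, of "\<lambda>u. rowbad N l (pc_iter N X0 u l) u" "\<lambda>h b. Psi h \<and> b"] by simp
  from FR_set[OF this] show ?thesis using space_pc by simp
qed

lemma key:
  assumes N: "N \<ge> 1" and D: "\<And>u. Psi (hist N X0 u l) \<Longrightarrow> Dv N (pc_iter N X0 u l) \<le> \<delta>"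
  shows "measure pc_space {u. Psi (hist N X0 u l) \<and> rowbad N l (pc_iter N X0 u l) u}
          \<le> \<delta> * real N * measure pc_space {u. Psi (hist N X0 u l)}"
proof -
  obtain F where F: "finite F" "\<And>u. hist N X0 u l \<in> F"
    using FR_pc_hist[of N X0 l] unfolding FR_def space_pc by blast
  define F' where "F' = {h\<in>F. Psi h}"
  have fin: "finite F'" using F by (simp add: F'_def)
  have hs: "{u. hist N X0 u l = h} \<in> sets pc_space" for h using sets_hist[of "\<lambda>x. x = h"] by simp
  have rs: "{u. rowbad N l v u} \<in> sets pc_space" for v using sets_rowbad[of l pc_space N v, OF coord_pc] space_pc by simp
  have e1: "{u. Psi (hist N X0 u l) \<and> rowbad N l (pc_iter N X0 u l) u} =
      (\<Union>h\<in>F'. {u. hist N X0 u l = h \<and> rowbad N l (last h) u})"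
    using F by (auto simp: F'_def hist_last)
  have e2: "{u. Psi (hist N X0 u l)} = (\<Union>h\<in>F'. {u. hist N X0 u l = h})"
    using F by (auto simp: F'_def)
  have "measure pc_space {u. Psi (hist N X0 u l) \<and> rowbad N l (pc_iter N X0 u l) u}
      \<le> (\<Sum>h\<in>F'. measure pc_space {u. hist N X0 u l = h \<and> rowbad N l (last h) u})"
    unfolding e1
  proof (rule measure_UNION_le[OF fin])
    fix h
    have "{u. hist N X0 u l = h \<and> rowbad N l (last h) u} = {u. hist N X0 u l = h} \<inter> {u. rowbad N l (last h) u}" by auto
    then show "{u. hist N X0 u l = h \<and> rowbad N l (last h) u} \<in> sets pc_space" using hs rs by auto
  qed
  also have "\<dots> = (\<Sum>h\<in>F'. measure pc_space {u. hist N X0 u l = h} * measure pc_space {u. rowbad N l (last h) u})"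
    by (simp add: indep_hist_row)
  also have "\<dots> \<le> (\<Sum>h\<in>F'. measure pc_space {u. hist N X0 u l = h} * (\<delta> * real N))"
  proof (rule sum_mono)
    fix h assume h: "h \<in> F'"
    show "measure pc_space {u. hist N X0 u l = h} * measure pc_space {u. rowbad N l (last h) u}
        \<le> measure pc_space {u. hist N X0 u l = h} * (\<delta> * real N)"
    proof (cases "\<exists>u. hist N X0 u l = h")
      case True
      then obtain u where u: "hist N X0 u l = h" by blast
      then have "Dv N (last h) \<le> \<delta>" using D[of u] h hist_last[of N X0 u l] by (simp add: F'_def)
      then have "measure pc_space {u. rowbad N l (last h) u} \<le> \<delta> * real N"
      proof -
        have "Dv N (last h) * real N \<le> \<delta> * real N"
          by (rule mult_right_mono) (use \<open>Dv N (last h) \<le> \<delta>\<close> in auto)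
        then show ?thesis using prob_rowbad[OF N, of l "last h"] by linarith
      qed
      then show ?thesis by (intro mult_left_mono) auto
    next
      case False
      then have "{u. hist N X0 u l = h} = {}" by auto
      then show ?thesis by simp
    qed
  qed
  also have "\<dots> = (\<delta> * real N) * (\<Sum>h\<in>F'. measure pc_space {u. hist N X0 u l = h})"
    by (simp add: sum_distrib_left mult_ac)
  also have "(\<Sum>h\<in>F'. measure pc_space {u. hist N X0 u l = h}) = measure pc_space {u. Psi (hist N X0 u l)}"
    unfolding e2 by (rule Q.finite_measure_finite_Union[symmetric]) (use fin hs in \<open>auto simp: disjoint_family_on_def\<close>)
  finally show ?thesis by simp
qed



lemma conv_sets: "{u. (\<lambda>n. l1_dist (pc_iter N X0 u n) r) \<longlonglongrightarrow> 0} \<in> sets pc_space"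
proof -
  let ?f = "\<lambda>n u. l1_dist (pc_iter N X0 u n) r"
  have eq: "{u. (\<lambda>n. ?f n u) \<longlonglongrightarrow> 0} = {u\<in>space pc_space. \<forall>k::nat. \<exists>n0::nat. \<forall>n. n0 \<le> n \<longrightarrow> \<bar>?f n u\<bar> < 1 / Suc k}"
  proof (rule set_eqI, rule iffI)
    fix u assume "u \<in> {u. (\<lambda>n. ?f n u) \<longlonglongrightarrow> 0}"
    then have L: "(\<lambda>n. ?f n u) \<longlonglongrightarrow> 0" by simp
    show "u \<in> {u\<in>space pc_space. \<forall>k::nat. \<exists>n0::nat. \<forall>n. n0 \<le> n \<longrightarrow> \<bar>?f n u\<bar> < 1 / Suc k}"
    proof (simp add: space_pc, intro allI)
      fix k :: nat
      have "(1::real) / Suc k > 0" by simp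
      from LIMSEQ_D[OF L this] show "\<exists>n0. \<forall>n\<ge>n0. \<bar>?f n u\<bar> < 1 / (1 + real k)" by simp
    qed
  next
    fix u assume a: "u \<in> {u\<in>space pc_space. \<forall>k::nat. \<exists>n0::nat. \<forall>n. n0 \<le> n \<longrightarrow> \<bar>?f n u\<bar> < 1 / Suc k}"
    have "(\<lambda>n. ?f n u) \<longlonglongrightarrow> 0"
    proof (rule LIMSEQ_I)
      fix e :: real assume e: "0 < e"
      obtain k :: nat where k: "inverse (real (Suc k)) < e" using reals_Archimedean[OF e] by blast
      obtain n0 where "\<forall>n. n0 \<le> n \<longrightarrow> \<bar>?f n u\<bar> < 1 / Suc k" using a by blast
      then show "\<exists>no. \<forall>n\<ge>no. norm (?f n u - 0) < e" using k
        by (metis diff_zero inverse_eq_divide order.strict_trans real_norm_def)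
    qed
    then show "u \<in> {u. (\<lambda>n. ?f n u) \<longlonglongrightarrow> 0}" by simp
  qed
  have b: "{u\<in>space pc_space. \<bar>?f n u\<bar> < 1 / Suc k} \<in> sets pc_space" for n k
    using FR_pred[OF FR_pc_iter, of "\<lambda>v. \<bar>l1_dist v r\<bar> < 1 / Suc k" N X0 n] by simp
  show ?thesis unfolding eq
    by (intro sets.sets_Collect_countable_All sets.sets_Collect_countable_Ex sets.sets_Collect_imp
        sets.sets_Collect_const b)
qed

lemma main_bound:
  fixes N :: nat and X0 :: "real list" and eps :: real
  assumes N: "N \<ge> 1" and eps: "0 < eps" "eps < 1 / real N"
  shows "measure pc_space {u \<in> space pc_space.
            (\<lambda>l. l1_dist (pc_iter N X0 u l) (replicate N (1 / real N))) \<longlonglongrightarrow> 0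
            \<and> (\<exists>l. in_T N eps (pc_iter N X0 u l))}
         \<ge> (1 - real N * eps) * measure pc_space {u \<in> space pc_space. \<exists>l. in_T N eps (pc_iter N X0 u l)}"
proof -
  define T where "T = (\<lambda>k u. in_T N eps (pc_iter N X0 u k))"
  define good where "good = (\<lambda>k u. pc_iter N X0 u (Suc k) = Gs N (pc_iter N X0 u k))"
  define Inv where "Inv = (\<lambda>m j u. T m u \<and> (\<forall>k<m. \<not> T k u) \<and> (\<forall>i<j. good (m + i) u))"
  define q where "q = 1 - 1 / real N"
  define conv where "conv = (\<lambda>u. (\<lambda>l. l1_dist (pc_iter N X0 u l) (replicate N (1 / real N))) \<longlonglongrightarrow> 0)"
  define Hm where "Hm = (\<lambda>m. {u. Inv m 0 u})"
  define Bd where "Bd = (\<lambda>m j. {u. Inv m j u \<and> rowbad N (m + j) (pc_iter N X0 u (m + j)) u})"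
  define H where "H = {u. \<exists>l. T l u}"
  define C where "C = {u. conv u}"
  have q0: "0 \<le> q" "q < 1" using N by (auto simp: q_def)
  have Nq: "1 - q = 1 / real N" by (simp add: q_def)

  have I: "Inv m j u \<Longrightarrow> length (pc_iter N X0 u (m + j)) = N \<and> sum_list (pc_iter N X0 u (m + j)) = 1
            \<and> Dv N (pc_iter N X0 u (m + j)) \<le> q ^ j * (eps / real N)" for m j u
  proof (induction j)
    case 0
    then have "T m u" by (simp add: Inv_def)
    then show ?case using N by (simp add: T_def in_T_def Let_def Dv_def)
  next
    case (Suc j)
    then have IH: "length (pc_iter N X0 u (m + j)) = N \<and> sum_list (pc_iter N X0 u (m + j)) = 1
            \<and> Dv N (pc_iter N X0 u (m + j)) \<le> q ^ j * (eps / real N)"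
      by (auto simp: Inv_def)
    have g: "good (m + j) u" using Suc.prems by (simp add: Inv_def)
    then have e: "pc_iter N X0 u (m + Suc j) = Gs N (pc_iter N X0 u (m + j))" by (simp add: good_def)
    note G = G_props[OF N, of "pc_iter N X0 u (m + j)"]
    have "Dv N (Gs N (pc_iter N X0 u (m + j))) \<le> q * Dv N (pc_iter N X0 u (m + j))"
      using G IH by (simp add: q_def)
    also have "\<dots> \<le> q * (q ^ j * (eps / real N))" using IH q0 by (intro mult_left_mono) auto
    finally show ?case using G IH e by simp
  qed

  have Dsmall: "Inv m j u \<Longrightarrow> Dv N (pc_iter N X0 u (m + j)) < 1 / real N" for m j u
  proof -
    assume a: "Inv m j u"
    have "q ^ j \<le> 1" using q0 by (simp add: power_le_one)
    then have "q ^ j * (eps / real N) \<le> 1 * (eps / real N)" using eps by (intro mult_right_mono) auto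
    also have "\<dots> < 1 / real N"
    proof -
      have "1 / real N \<le> 1" using N by simp
      then have "eps < 1" using eps by linarith
      then show ?thesis using N by (simp add: divide_strict_right_mono)
    qed
    finally show ?thesis using I[OF a] by linarith
  qed

  have II: "Inv m j u \<Longrightarrow> \<not> rowbad N (m + j) (pc_iter N X0 u (m + j)) u \<Longrightarrow> good (m + j) u" for m j u
  proof -
    assume a: "Inv m j u" and nb: "\<not> rowbad N (m + j) (pc_iter N X0 u (m + j)) u"
    let ?v = "pc_iter N X0 u (m + j)"
    have "pc_step N 0 ?v (\<lambda>p. u (m + j, p)) = Gs N ?v"
    proof (rule step_good[OF N])
      show "length ?v = N" "sum_list ?v = 1" using I[OF a] by auto
      show "\<forall>w\<in>set ?v. 0 < w \<and> w < 2 / real N" using Dv_pos[OF Dsmall[OF a]] by blast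
      show "\<forall>p<length ?v. \<not> bad (1 / real N) (?v ! p) (u (m + j, p))" using nb by (auto simp: rowbad_def)
    qed
    then show ?thesis by (simp add: good_def)
  qed

  have III: "Inv m 0 u \<Longrightarrow> (\<forall>j. good (m + j) u) \<Longrightarrow> conv u" for m u
  proof -
    assume a: "Inv m 0 u" and g: "\<forall>j. good (m + j) u"
    have inv: "Inv m j u" for j using a g by (auto simp: Inv_def)
    have "(\<lambda>j. l1_dist (pc_iter N X0 u (j + m)) (replicate N (1 / real N))) \<longlonglongrightarrow> 0"
    proof (rule Lim_null_comparison)
      show "\<forall>\<^sub>F j in sequentially. norm (l1_dist (pc_iter N X0 u (j + m)) (replicate N (1 / real N))) \<le> q ^ j * (eps / real N)"
      proof (rule always_eventually, rule allI)
        fix j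
        have L: "length (pc_iter N X0 u (m + j)) = N" using I[OF inv[of j]] by simp
        have "Dv N (pc_iter N X0 u (m + j)) \<ge> 0" unfolding Dv_def by (intro sum_list_nonneg) auto
        then show "norm (l1_dist (pc_iter N X0 u (j + m)) (replicate N (1 / real N))) \<le> q ^ j * (eps / real N)"
          using l1_eq[OF L] I[OF inv[of j]] by (simp add: add.commute)
      qed
      show "(\<lambda>j. q ^ j * (eps / real N)) \<longlonglongrightarrow> 0"
        by (rule tendsto_mult_left_zero, rule LIMSEQ_power_zero) (use q0 in simp)
    qed
    then show "conv u" unfolding conv_def by (rule LIMSEQ_offset)
  qed

  have IV: "u \<in> H \<Longrightarrow> \<not> conv u \<Longrightarrow> \<exists>m j. u \<in> Bd m j" for u
  proof -
    assume h: "u \<in> H" and nc: "\<not> conv u"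
    from h obtain m where m: "T m u" "\<forall>k<m. \<not> T k u"
      unfolding H_def using exists_least_iff[of "\<lambda>l. T l u"] by auto
    have "\<exists>j. \<not> good (m + j) u" using III[of m u] m nc by (auto simp: Inv_def)
    then obtain j where j: "\<not> good (m + j) u" "\<forall>i<j. good (m + i) u"
      using exists_least_iff[of "\<lambda>j. \<not> good (m + j) u"] by auto
    have inv: "Inv m j u" using m j by (simp add: Inv_def)
    then have "rowbad N (m + j) (pc_iter N X0 u (m + j)) u" using II j(1) by blast
    then show ?thesis using inv by (auto simp: Bd_def)
  qed

  define Psi where "Psi = (\<lambda>m j h. in_T N eps (h ! m) \<and> (\<forall>k<m. \<not> in_T N eps (h ! k)) \<and>
      (\<forall>i<j. h ! (Suc (m + i)) = Gs N (h ! (m + i))))"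
  have Psi_eq: "Psi m j (hist N X0 u (m + j)) = Inv m j u" for m j u
    by (auto simp: Psi_def Inv_def T_def good_def hist_nth)
  have Bd_eq: "Bd m j = {u. Psi m j (hist N X0 u (m + j)) \<and> rowbad N (m + j) (pc_iter N X0 u (m + j)) u}" for m j
    by (simp add: Bd_def Psi_eq)
  have Inv_eq: "{u. Inv m j u} = {u. Psi m j (hist N X0 u (m + j))}" for m j
    by (simp add: Psi_eq)
  have Bd_sets: "Bd m j \<in> sets pc_space" for m j unfolding Bd_eq by (rule sets_hist_row)
  have Inv_sets: "{u. Inv m j u} \<in> sets pc_space" for m j unfolding Inv_eq by (rule sets_hist)
  have Hm_sets: "Hm m \<in> sets pc_space" for m unfolding Hm_def by (rule Inv_sets)

  have V: "measure pc_space (Bd m j) \<le> q ^ j * eps * measure pc_space (Hm m)" for m j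
  proof -
    have k1: "measure pc_space (Bd m j) \<le> (q ^ j * (eps / real N)) * real N * measure pc_space {u. Psi m j (hist N X0 u (m + j))}"
      unfolding Bd_eq
    proof (rule key[OF N])
      fix u assume "Psi m j (hist N X0 u (m + j))"
      then have "Inv m j u" by (simp add: Psi_eq)
      then show "Dv N (pc_iter N X0 u (m + j)) \<le> q ^ j * (eps / real N)" using I by blast
    qed
    have k2: "(q ^ j * (eps / real N)) * real N = q ^ j * eps" using N by simp
    have "measure pc_space {u. Psi m j (hist N X0 u (m + j))} \<le> measure pc_space (Hm m)"
      unfolding Inv_eq[symmetric] Hm_def
      by (rule Q.finite_measure_mono[OF _ Inv_sets[of m 0]]) (auto simp: Inv_def)
    then have k4: "q ^ j * eps * measure pc_space {u. Psi m j (hist N X0 u (m + j))} \<le> q ^ j * eps * measure pc_space (Hm m)"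
      using q0 eps by (intro mult_left_mono) auto
    show ?thesis using k1 k2 k4 by simp
  qed

  define Bm where "Bm = (\<lambda>m. \<Union>j. Bd m j)"
  have geo: "(\<lambda>j. q ^ j * (eps * measure pc_space (Hm m))) sums (eps * measure pc_space (Hm m) / (1 - q))" for m
  proof -
    have "norm q < 1" using q0 by simp
    from sums_mult2[OF geometric_sums[OF this], of "eps * measure pc_space (Hm m)"]
    show ?thesis by simp
  qed
  have VI: "measure pc_space (Bm m) \<le> real N * eps * measure pc_space (Hm m)" for m
  proof -
    have sm: "summable (\<lambda>j. measure pc_space (Bd m j))"
      by (rule summable_comparison_test'[OF sums_summable[OF geo[of m]], of 0])
         (use V in \<open>simp add: mult.assoc\<close>)
    have "measure pc_space (Bm m) \<le> (\<Sum>j. measure pc_space (Bd m j))"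
      unfolding Bm_def by (rule Q.finite_measure_subadditive_countably) (use Bd_sets sm in auto)
    also have "\<dots> \<le> (\<Sum>j. q ^ j * (eps * measure pc_space (Hm m)))"
      by (rule suminf_le) (use V sm sums_summable[OF geo[of m]] in \<open>auto simp: mult.assoc\<close>)
    also have "\<dots> = eps * measure pc_space (Hm m) / (1 - q)" using geo[of m] by (rule sums_unique[symmetric])
    also have "\<dots> = real N * eps * measure pc_space (Hm m)" unfolding Nq using N by simp
    finally show ?thesis .
  qed

  have Hdisj: "disjoint_family Hm"
    unfolding disjoint_family_on_def Hm_def Inv_def
    by (auto, metis linorder_neqE_nat)
  have HU: "H = (\<Union>m. Hm m)"
  proof
    show "H \<subseteq> (\<Union>m. Hm m)"
    proof
      fix u assume "u \<in> H"
      then obtain m where "T m u" "\<forall>k<m. \<not> T k u"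
        unfolding H_def using exists_least_iff[of "\<lambda>l. T l u"] by auto
      then show "u \<in> (\<Union>m. Hm m)" by (auto simp: Hm_def Inv_def)
    qed
    show "(\<Union>m. Hm m) \<subseteq> H" by (auto simp: Hm_def Inv_def H_def)
  qed
  have Hsums: "(\<lambda>m. measure pc_space (Hm m)) sums measure pc_space H"
    unfolding HU by (rule Q.finite_measure_UNION) (use Hm_sets Hdisj in auto)
  have H_sets: "H \<in> sets pc_space" unfolding HU using Hm_sets by auto
  have C_sets: "C \<in> sets pc_space" unfolding C_def conv_def by (rule conv_sets)
  have Bm_sets: "Bm m \<in> sets pc_space" for m unfolding Bm_def using Bd_sets by auto
  have sumB: "summable (\<lambda>m. measure pc_space (Bm m))"
    by (rule summable_comparison_test'[OF summable_mult[OF sums_summable[OF Hsums], of "real N * eps"], of 0])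
       (use VI in simp)
  have "H - C \<subseteq> (\<Union>m. Bm m)" using IV unfolding C_def Bm_def by blast
  then have "measure pc_space (H - C) \<le> measure pc_space (\<Union>m. Bm m)"
    using Bm_sets by (intro Q.finite_measure_mono) auto
  also have "\<dots> \<le> (\<Sum>m. measure pc_space (Bm m))"
    by (rule Q.finite_measure_subadditive_countably) (use Bm_sets sumB in auto)
  also have "\<dots> \<le> (\<Sum>m. real N * eps * measure pc_space (Hm m))"
    by (rule suminf_le) (use VI sumB summable_mult[OF sums_summable[OF Hsums], of "real N * eps"] in auto)
  also have "\<dots> = real N * eps * measure pc_space H"
    using sums_unique[OF sums_mult[OF Hsums, of "real N * eps"]] by simp
  finally have HC: "measure pc_space (H - C) \<le> real N * eps * measure pc_space H" .
  have "measure pc_space (H - C) = measure pc_space H - measure pc_space (H \<inter> C)"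
    by (rule Q.finite_measure_Diff'[OF H_sets C_sets])
  with HC have "measure pc_space (H \<inter> C) \<ge> (1 - real N * eps) * measure pc_space H"
    by (simp add: algebra_simps)
  moreover have "{u \<in> space pc_space. conv u \<and> (\<exists>l. T l u)} = H \<inter> C" by (auto simp: H_def C_def space_pc)
  moreover have "{u \<in> space pc_space. \<exists>l. T l u} = H" by (auto simp: H_def space_pc)
  ultimately show ?thesis unfolding conv_def T_def by simp
qed

theorem lemma4:
  fixes Nobj :: nat
  assumes "Nobj \<ge> 1"
  shows "\<exists>c3 > 0. \<forall>X0 :: real list. (\<forall>w \<in> set X0. w > 0) \<longrightarrow> sum_list X0 = 1 \<longrightarrow>
           (\<forall>eps > 0.
              measure pc_space
                {u \<in> space pc_space.
                   (\<lambda>l. l1_dist (pc_iter Nobj X0 u l) (replicate Nobj (1 / real Nobj))) \<longlonglongrightarrow> 0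
                 \<and> (\<exists>l. in_T Nobj eps (pc_iter Nobj X0 u l))}
              \<ge> (1 - c3 * eps) *
                measure pc_space {u \<in> space pc_space. \<exists>l. in_T Nobj eps (pc_iter Nobj X0 u l)})"
proof (intro exI[of _ "real Nobj"] conjI allI impI)
  show "real Nobj > 0" using assms by simp
  fix X0 :: "real list" and eps :: real
  assume eps: "eps > 0"
  show "measure pc_space
                {u \<in> space pc_space.
                   (\<lambda>l. l1_dist (pc_iter Nobj X0 u l) (replicate Nobj (1 / real Nobj))) \<longlonglongrightarrow> 0
                 \<and> (\<exists>l. in_T Nobj eps (pc_iter Nobj X0 u l))}
              \<ge> (1 - real Nobj * eps) *
                measure pc_space {u \<in> space pc_space. \<exists>l. in_T Nobj eps (pc_iter Nobj X0 u l)}"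
  proof (cases "eps < 1 / real Nobj")
    case True
    then show ?thesis using main_bound[OF assms eps True] by simp
  next
    case False
    then have "1 - real Nobj * eps \<le> 0" using assms by (simp add: field_simps)
    then have "(1 - real Nobj * eps) * measure pc_space {u \<in> space pc_space. \<exists>l. in_T Nobj eps (pc_iter Nobj X0 u l)} \<le> 0"
      by (intro mult_nonpos_nonneg) auto
    also have "0 \<le> measure pc_space
                {u \<in> space pc_space.
                   (\<lambda>l. l1_dist (pc_iter Nobj X0 u l) (replicate Nobj (1 / real Nobj))) \<longlonglongrightarrow> 0
                 \<and> (\<exists>l. in_T Nobj eps (pc_iter Nobj X0 u l))}" by simp
    finally show ?thesis .
  qed
qed


end
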